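(* Let $V=\{n\in\mathbb{Z} : n\geq 2,\ 5\nmid n\}$ and let $\Gamma_5$ be the directed graph with vertex set $V$ whose edges are the up-edges $(n,(n+5)^2)$ for $n\in V$ and the down-edges $(n^2,n)$ for $n\in V$. Then $\Gamma_5$ is connected: for any $x,y\in V$ there is a directed path in $\Gamma_5$ from $x$ to $y$.
   Context: A directed path from $x$ to $y$ is a finite sequence of vertices $x=v_0,v_1,\dots,v_m=y$ such that each $(v_{j-1},v_j)$ is an edge of $\Gamma_5$. *)

theory Defs
  imports Main
begin

definition V5 :: "int set" where
  "V5 = {n. n \<ge> 2 \<and> \<not> (5 dvd n)}"

definition edge5 :: "int \<Rightarrow> int \<Rightarrow> bool" where
  "edge5 a b \<longleftrightarrow> (a \<in> V5 \<and> b = (a + 5)^2) \<or> (b \<in> V5 \<and> a = b^2)"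

definition dpath5 :: "int list \<Rightarrow> int \<Rightarrow> int \<Rightarrow> bool" where
  "dpath5 vs x y \<longleftrightarrow> vs \<noteq> [] \<and> hd vs = x \<and> last vs = y \<and>
     (\<forall>j. Suc j < length vs \<longrightarrow> edge5 (vs ! j) (vs ! Suc j))"

end

theory Submission
  imports Defs
begin

abbreviation reach5 where "reach5 \<equiv> edge5\<^sup>*\<^sup>*"

lemma reach_path: "reach5 x y \<Longrightarrow> \<exists>vs. dpath5 vs x y"
proof (induction rule: converse_rtranclp_induct)
  case base
  then show ?case by (rule exI[of _ "[y]"]) (simp add: dpath5_def)
next
  case (step x z)
  then obtain vs where vs: "dpath5 vs z y" by blast
  have "dpath5 (x # vs) x y"
    unfolding dpath5_def
  proof (intro conjI allI impI)
    fix j assume j: "Suc j < length (x # vs)"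
    show "edge5 ((x # vs) ! j) ((x # vs) ! Suc j)"
    proof (cases j)
      case 0
      then show ?thesis using vs step(1) by (cases vs) (auto simp: dpath5_def)
    next
      case (Suc i)
      then show ?thesis using vs j by (auto simp: dpath5_def)
    qed
  qed (use vs in \<open>auto simp: dpath5_def\<close>)
  then show ?case by blast
qed

lemma V5_plus: "a \<in> V5 \<Longrightarrow> a + 5 \<in> V5"
  unfolding V5_def by auto

lemma sq_mod5: "(a::int)^2 mod 5 = ((a mod 5)^2) mod 5"
  by (simp add: power_mod)

lemma V5_sq: "a \<in> V5 \<Longrightarrow> a ^ 2 \<in> V5"
proof -
  assume a: "a \<in> V5"
  then have "a \<ge> 2" "\<not> 5 dvd a" by (auto simp: V5_def)
  moreover have "a ^ 2 \<ge> a" using \<open>a \<ge> 2\<close> by (simp add: power2_eq_square)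
  moreover have "\<not> 5 dvd a ^ 2"
  proof -
    have "a mod 5 \<in> {1,2,3,4}" using \<open>\<not> 5 dvd a\<close> by (auto simp: dvd_eq_mod_eq_0)
    then have "a^2 mod 5 \<noteq> 0" using sq_mod5[of a] by auto
    then show ?thesis by (simp add: dvd_eq_mod_eq_0)
  qed
  ultimately show ?thesis by (auto simp: V5_def)
qed

lemma step_up: "a \<in> V5 \<Longrightarrow> reach5 a ((a+5)^2)"
  by (auto simp: edge5_def)

lemma step_plus5: "a \<in> V5 \<Longrightarrow> reach5 a (a+5)"
proof -
  assume a: "a \<in> V5"
  have "edge5 a ((a+5)^2)" using a by (simp add: edge5_def)
  moreover have "edge5 ((a+5)^2) (a+5)" using V5_plus[OF a] by (simp add: edge5_def)
  ultimately show ?thesis by auto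
qed

lemma step_plusk: "a \<in> V5 \<Longrightarrow> reach5 a (a + 5 * int k) \<and> a + 5 * int k \<in> V5"
proof (induction k)
  case 0
  then show ?case by simp
next
  case (Suc k)
  then have "reach5 (a + 5 * int k) (a + 5 * int k + 5)" "a + 5 * int k + 5 \<in> V5"
    using step_plus5 V5_plus by auto
  then show ?case using Suc by (auto simp: algebra_simps intro: rtranclp_trans)
qed

lemma step_cong: "a \<in> V5 \<Longrightarrow> a \<le> b \<Longrightarrow> a mod 5 = b mod 5 \<Longrightarrow> reach5 a b"
proof -
  assume a: "a \<in> V5" and ab: "a \<le> b" "a mod 5 = b mod 5"
  then have "5 dvd (b - a)" using mod_eq_dvd_iff by metis
  then obtain m where m: "b - a = 5 * m" by blast
  with ab have "m \<ge> 0" by linarith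
  then have "b = a + 5 * int (nat m)" using m by simp
  then show ?thesis using step_plusk[OF a, of "nat m"] by simp
qed

lemma step_down: "a \<in> V5 \<Longrightarrow> t \<in> V5 \<Longrightarrow> a \<le> t^2 \<Longrightarrow> a mod 5 = t^2 mod 5 \<Longrightarrow> reach5 a t"
proof -
  assume h: "a \<in> V5" "t \<in> V5" "a \<le> t^2" "a mod 5 = t^2 mod 5"
  have "reach5 a (t^2)" using step_cong h by blast
  moreover have "edge5 (t^2) t" using h by (simp add: edge5_def)
  ultimately show ?thesis by auto
qed

lemma hub_aux: "n \<in> V5 \<Longrightarrow> n mod 5 = 1 \<Longrightarrow> n \<le> (5 * int k + 6)^2 \<Longrightarrow> reach5 n 6"
proof (induction k arbitrary: n)
  case 0
  have "6 \<in> V5" by (simp add: V5_def)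
  then show ?case using step_down[of n 6] 0 by simp
next
  case (Suc k)
  let ?t = "5 * int k + 6 + 5"
  have tV: "?t \<in> V5" using step_plusk[of 6 "Suc k"] by (simp add: V5_def algebra_simps)
  have t1: "?t mod 5 = 1" by presburger
  have "(5 * int k + 6 + 5)^2 mod 5 = 1"
    using sq_mod5[of "5 * int k + 6 + 5"] t1 by simp
  then have r1: "reach5 n ?t" using step_down[OF Suc.prems(1) tV] Suc.prems
    by (simp add: algebra_simps)
  have "?t \<le> (5 * int k + 6)^2" by (simp add: power2_eq_square algebra_simps)
  moreover note t1
  ultimately have "reach5 ?t 6" using Suc.IH tV by blast
  with r1 show ?case by auto
qed

lemma hub: "n \<in> V5 \<Longrightarrow> n mod 5 = 1 \<Longrightarrow> reach5 n 6"
proof -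
  assume h: "n \<in> V5" "n mod 5 = 1"
  then have "n \<ge> 0" by (simp add: V5_def)
  then have "n \<le> (5 * int (nat n) + 6)^2" by (simp add: power2_eq_square algebra_simps)
  then show ?thesis using hub_aux h by blast
qed


lemma to_hub: "x \<in> V5 \<Longrightarrow> reach5 x 6"
proof -
  assume x: "x \<in> V5"
  then have nd: "x mod 5 \<noteq> 0" by (simp add: V5_def dvd_eq_mod_eq_0)
  have m: "x mod 5 \<in> {1,2,3,4}" using nd by auto
  let ?u = "(x+5)^2"
  have uV: "?u \<in> V5" using V5_sq V5_plus x by blast
  have u: "?u mod 5 = ((x mod 5)^2) mod 5" using sq_mod5[of "x+5"] by simp
  let ?w = "(?u+5)^2"
  have wV: "?w \<in> V5" using V5_sq V5_plus uV by blast
  have w: "?w mod 5 = ((?u mod 5)^2) mod 5" using sq_mod5[of "?u+5"] by simp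
  show ?thesis
  proof (cases "x mod 5 = 1")
    case True then show ?thesis using hub x by blast
  next
    case False
    show ?thesis
    proof (cases "x mod 5 = 4")
      case True
      then have "?u mod 5 = 1" using u by simp
      then show ?thesis using hub[OF uV] step_up[OF x] by auto
    next
      case False
      then have "x mod 5 = 2 \<or> x mod 5 = 3" using m \<open>x mod 5 \<noteq> 1\<close> by auto
      then have "?u mod 5 = 4" using u by auto
      then have "?w mod 5 = 1" using w by simp
      then show ?thesis using hub[OF wV] step_up[OF x] step_up[OF uV] by auto
    qed
  qed
qed

lemma from_hub: "y \<in> V5 \<Longrightarrow> reach5 6 y"
proof -
  assume y: "y \<in> V5"
  then have nd: "y mod 5 \<noteq> 0" and y2: "y \<ge> 2" by (auto simp: V5_def dvd_eq_mod_eq_0)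
  have m: "y mod 5 \<in> {1,2,3,4}" using nd by auto
  have s: "y^2 mod 5 = ((y mod 5)^2) mod 5" by (rule sq_mod5)
  have V6: "6 \<in> V5" and V4: "4 \<in> V5" by (auto simp: V5_def)
  have "reach5 6 4" using step_down[OF V6 V4] by simp
  show ?thesis
  proof (cases "y mod 5 = 1 \<or> y mod 5 = 4")
    case True
    then have "y \<ge> 4" using y2 by presburger
    then have "4 * 4 \<le> y * y" using mult_mono[of 4 y 4 y] by simp
    then have "6 \<le> y^2" by (simp add: power2_eq_square)
    moreover have "y^2 mod 5 = 1" using True s by auto
    ultimately show ?thesis using step_down[OF V6 y] by simp
  next
    case False
    then have "y^2 mod 5 = 4" using m s by auto
    moreover have "2 * 2 \<le> y * y" using mult_mono[of 2 y 2 y] y2 by simp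
    then have "4 \<le> y^2" by (simp add: power2_eq_square)
    ultimately have "reach5 4 y" using step_down[OF V4 y] by simp
    with \<open>reach5 6 4\<close> show ?thesis by auto
  qed
qed

theorem theorem5:
  assumes "x \<in> V5" and "y \<in> V5"
  shows "\<exists>vs. dpath5 vs x y"
  using reach_path to_hub[OF assms(1)] from_hub[OF assms(2)]
  by (meson rtranclp_trans)

end
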